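(* Let $a,b,c,\alpha,\beta,\gamma,\lambda\in\mathbb{R}$ with $\alpha=0$ whenever $\gamma\neq 0$, and let $\Omega\subset\mathbb{R}$ be a compact interval containing $0$ in its interior. Consider the one-input control-affine system on $\mathbb{R}^2$ (coordinates $(s,t)$) $$\dot s=\beta s+\omega b,\qquad \dot t=(\lambda+\beta)t+\tfrac12\alpha s^2+\gamma s+\omega(c+as),\qquad \omega\in\Omega,$$ i.e. with drift $f_0(s,t)=\big(\beta s,(\lambda+\beta)t+\tfrac12\alpha s^2+\gamma s\big)$ and control vector field $f_1(s,t)=(b,c+as)$. Then this system satisfies the Lie algebra rank condition if and only if $$b\cdot\Big(\big(b\alpha+a(\lambda-\beta)\big)^2+\big(b\gamma+c\lambda\big)^2\Big)\neq 0.$$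
   Context: A control-affine system $\dot x=f_0(x)+\omega f_1(x)$ on a manifold $M$ satisfies the Lie algebra rank condition (LARC) if the smallest Lie algebra of vector fields containing $f_0$ and $f_1$, evaluated at each point $x\in M$, spans the tangent space $T_xM$. This system is the linear control system induced on the homogeneous space $(\mathbb{R}\mathbf e_1\times\{0\})\backslash\mathbb{H}\simeq\mathbb{R}^2$ of the 3-dimensional Heisenberg group. *)

theory Defs
  imports "HOL-Analysis.Analysis"
begin

definition lie_bracket :: "('a::real_normed_vector \<Rightarrow> 'a) \<Rightarrow> ('a \<Rightarrow> 'a) \<Rightarrow> 'a \<Rightarrow> 'a" where
  "lie_bracket X Y = (\<lambda>x. frechet_derivative Y (at x) (X x) - frechet_derivative X (at x) (Y x))"

inductive_set lie_gen :: "('a::real_normed_vector \<Rightarrow> 'a) set \<Rightarrow> ('a \<Rightarrow> 'a) set"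
  for S :: "('a \<Rightarrow> 'a) set" where
  base: "X \<in> S \<Longrightarrow> X \<in> lie_gen S"
| add: "X \<in> lie_gen S \<Longrightarrow> Y \<in> lie_gen S \<Longrightarrow> (\<lambda>x. X x + Y x) \<in> lie_gen S"
| scale: "X \<in> lie_gen S \<Longrightarrow> (\<lambda>x. r *\<^sub>R X x) \<in> lie_gen S"
| bracket: "X \<in> lie_gen S \<Longrightarrow> Y \<in> lie_gen S \<Longrightarrow> lie_bracket X Y \<in> lie_gen S"

definition LARC :: "('a::euclidean_space \<Rightarrow> 'a) set \<Rightarrow> bool" where
  "LARC S \<longleftrightarrow> (\<forall>x. span ((\<lambda>X. X x) ` lie_gen S) = UNIV)"

end

theory Submission
  imports Defs
begin
definition FF :: "real \<Rightarrow> real \<Rightarrow> real \<Rightarrow> real \<Rightarrow> real \<Rightarrow> real \<Rightarrow> real \<times> real \<Rightarrow> real \<times> real" where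
  "FF x1 x2 x3 x4 x5 x6 = (\<lambda>z. (x1 + x2 * fst z, x3 + x4 * fst z + x5 * (fst z)^2 + x6 * snd z))"

lemma FF_deriv:
  "(FF y1 y2 y3 y4 y5 y6 has_derivative
     (\<lambda>v. (y2 * fst v, (y4 + 2 * y5 * fst p) * fst v + y6 * snd v))) (at p)"
proof -
  have "((\<lambda>z. (y1 + y2 * fst z, y3 + y4 * fst z + y5 * (fst z)^2 + y6 * snd z)) has_derivative
     (\<lambda>v. (0 + y2 * fst v, 0 + y4 * fst v + y5 * (of_nat 2 * fst p ^ (2 - 1) * fst v) + y6 * snd v))) (at p)"
    by (intro derivative_eq_intros) auto
  then show ?thesis unfolding FF_def by (simp add: algebra_simps)
qed
lemma FF_fd:
  "frechet_derivative (FF y1 y2 y3 y4 y5 y6) (at p) =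
     (\<lambda>v. (y2 * fst v, (y4 + 2 * y5 * fst p) * fst v + y6 * snd v))"
  using frechet_derivative_at[OF FF_deriv] by (rule sym)

lemma FF_bracket:
  "lie_bracket (FF x1 x2 x3 x4 x5 x6) (FF y1 y2 y3 y4 y5 y6) =
   FF (y2*x1 - x2*y1) 0 (y4*x1 + y6*x3 - x4*y1 - x6*y3)
      (y4*x2 + 2*y5*x1 + y6*x4 - x4*y2 - 2*x5*y1 - x6*y4)
      (2*y5*x2 + y6*x5 - 2*x5*y2 - x6*y5) 0"
  unfolding lie_bracket_def FF_fd
  by (simp add: fun_eq_iff FF_def algebra_simps power2_eq_square)
lemma FF_add: "(\<lambda>z. FF x1 x2 x3 x4 x5 x6 z + FF y1 y2 y3 y4 y5 y6 z) =
   FF (x1+y1) (x2+y2) (x3+y3) (x4+y4) (x5+y5) (x6+y6)"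
  by (auto simp: fun_eq_iff FF_def algebra_simps)

lemma FF_scale: "(\<lambda>z. r *\<^sub>R FF x1 x2 x3 x4 x5 x6 z) =
   FF (r*x1) (r*x2) (r*x3) (r*x4) (r*x5) (r*x6)"
  by (auto simp: fun_eq_iff FF_def algebra_simps)

lemma lie_gen_inv:
  assumes gen: "\<And>X. X \<in> S \<Longrightarrow> \<exists>x1 x2 x3 x4 x5 x6. X = FF x1 x2 x3 x4 x5 x6 \<and> Q x1 x2 x3 x4 x5 x6"
    and addQ: "\<And>x1 x2 x3 x4 x5 x6 y1 y2 y3 y4 y5 y6. Q x1 x2 x3 x4 x5 x6 \<Longrightarrow> Q y1 y2 y3 y4 y5 y6 \<Longrightarrow>
        Q (x1+y1) (x2+y2) (x3+y3) (x4+y4) (x5+y5) (x6+y6)"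
    and scQ: "\<And>r x1 x2 x3 x4 x5 x6. Q x1 x2 x3 x4 x5 x6 \<Longrightarrow>
        Q (r*x1) (r*x2) (r*x3) (r*x4) (r*x5) (r*x6)"
    and brQ: "\<And>x1 x2 x3 x4 x5 x6 y1 y2 y3 y4 y5 y6. Q x1 x2 x3 x4 x5 x6 \<Longrightarrow> Q y1 y2 y3 y4 y5 y6 \<Longrightarrow>
        Q (y2*x1 - x2*y1) 0 (y4*x1 + y6*x3 - x4*y1 - x6*y3)
      (y4*x2 + 2*y5*x1 + y6*x4 - x4*y2 - 2*x5*y1 - x6*y4)
      (2*y5*x2 + y6*x5 - 2*x5*y2 - x6*y5) 0"
    and X: "X \<in> lie_gen S"
  shows "\<exists>x1 x2 x3 x4 x5 x6. X = FF x1 x2 x3 x4 x5 x6 \<and> Q x1 x2 x3 x4 x5 x6"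
  using X
proof induction
  case (base X) then show ?case using gen by blast
next
  case (add X Y)
  from add.IH(1) obtain x1 x2 x3 x4 x5 x6 where X: "X = FF x1 x2 x3 x4 x5 x6" "Q x1 x2 x3 x4 x5 x6" by blast
  from add.IH(2) obtain y1 y2 y3 y4 y5 y6 where Y: "Y = FF y1 y2 y3 y4 y5 y6" "Q y1 y2 y3 y4 y5 y6" by blast
  show ?case unfolding X(1) Y(1) FF_add using addQ[OF X(2) Y(2)] by blast
next
  case (scale X r)
  from scale.IH obtain x1 x2 x3 x4 x5 x6 where X: "X = FF x1 x2 x3 x4 x5 x6" "Q x1 x2 x3 x4 x5 x6" by blast
  show ?case unfolding X(1) FF_scale using scQ[OF X(2)] by blast
next
  case (bracket X Y)
  from bracket.IH(1) obtain x1 x2 x3 x4 x5 x6 where X: "X = FF x1 x2 x3 x4 x5 x6" "Q x1 x2 x3 x4 x5 x6" by blast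
  from bracket.IH(2) obtain y1 y2 y3 y4 y5 y6 where Y: "Y = FF y1 y2 y3 y4 y5 y6" "Q y1 y2 y3 y4 y5 y6" by blast
  show ?case unfolding X(1) Y(1) FF_bracket using brQ[OF X(2) Y(2)] by blast
qed

lemma span_univ2:
  fixes V :: "(real \<times> real) set"
  assumes "(b, w) \<in> span V" "b \<noteq> 0" "(0, e) \<in> span V" "e \<noteq> 0"
  shows "span V = UNIV"
proof -
  have "(u, v) \<in> span V" for u v
  proof -
    have "(u, v) = (u/b) *\<^sub>R (b, w) + ((v - u*w/b)/e) *\<^sub>R (0, e)"
      using assms by (simp add: field_simps)
    also have "\<dots> \<in> span V" using assms by (intro span_add span_scale) auto
    finally show ?thesis .
  qed
  then show ?thesis by auto
qed

theorem proposition5: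
  fixes a b c \<alpha> \<beta> \<gamma> lam :: real and \<Omega> :: "real set"
  assumes "\<gamma> \<noteq> 0 \<Longrightarrow> \<alpha> = 0"
    and "\<exists>u v. u < 0 \<and> 0 < v \<and> \<Omega> = {u..v}"
  shows "LARC {(\<lambda>(s, t). (\<beta> * s, (lam + \<beta>) * t + 1/2 * \<alpha> * s^2 + \<gamma> * s)),
               (\<lambda>(s, t). (b, c + a * s))}
         \<longleftrightarrow> b * ((b * \<alpha> + a * (lam - \<beta>))^2 + (b * \<gamma> + c * lam)^2) \<noteq> 0"
proof -
  define S where "S = {(\<lambda>(s, t). (\<beta> * s, (lam + \<beta>) * t + 1/2 * \<alpha> * s^2 + \<gamma> * s)),
               (\<lambda>(s::real, t::real). (b, c + a * s))}"
  define f0 where "f0 = FF 0 \<beta> 0 \<gamma> (\<alpha>/2) (lam+\<beta>)"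
  define f1 where "f1 = FF b 0 c a 0 0"
  have S: "S = {f0, f1}"
    unfolding S_def f0_def f1_def by (auto simp: FF_def fun_eq_iff algebra_simps)
  define A where "A = b * \<alpha> + a * (lam - \<beta>)"
  define B where "B = b * \<gamma> + c * lam"
  have cond: "b * ((b * \<alpha> + a * (lam - \<beta>))^2 + (b * \<gamma> + c * lam)^2) \<noteq> 0
      \<longleftrightarrow> b \<noteq> 0 \<and> (A \<noteq> 0 \<or> B \<noteq> 0)"
    unfolding A_def[symmetric] B_def[symmetric]
    by (smt (verit) mult_eq_0_iff sum_power2_eq_zero_iff zero_eq_power2)
  show ?thesis
    unfolding S_def[symmetric] S cond
  proof
    assume L: "LARC {f0, f1}"
    show "b \<noteq> 0 \<and> (A \<noteq> 0 \<or> B \<noteq> 0)"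
    proof (rule ccontr)
      assume "\<not> (b \<noteq> 0 \<and> (A \<noteq> 0 \<or> B \<noteq> 0))"
      then consider "b = 0" | "b \<noteq> 0" "A = 0" "B = 0" by blast
      then show False
      proof cases
        case 1
        let ?Q = "\<lambda>x1 x2 x3 x4 x5 x6::real. x1 = 0"
        have inv: "\<exists>x1 x2 x3 x4 x5 x6. X = FF x1 x2 x3 x4 x5 x6 \<and> ?Q x1 x2 x3 x4 x5 x6"
          if "X \<in> lie_gen {f0, f1}" for X
          apply (rule lie_gen_inv[OF _ _ _ _ that])
          apply (auto simp: f0_def f1_def 1)
          apply blast+
          done
        have sub: "subspace {v::real\<times>real. fst v = 0}" by (auto simp: subspace_def)
        have "(\<lambda>X. X (0,0)) ` lie_gen {f0, f1} \<subseteq> {v. fst v = 0}"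
          using inv by (force simp: FF_def)
        then have "span ((\<lambda>X. X (0,0)) ` lie_gen {f0, f1}) \<subseteq> {v. fst v = 0}"
          using span_minimal sub by blast
        moreover have "span ((\<lambda>X. X (0,0)) ` lie_gen {f0, f1}) = UNIV"
          using L unfolding LARC_def by blast
        ultimately have "(1::real, 0::real) \<in> {v. fst v = 0}" by blast
        then show False by simp
      next
        case 2
        let ?Q = "\<lambda>x1 x2 x3 x4 x5 x6::real. b * x3 = c * x1 \<and> b * x4 + x6 * c = c * x2 + a * x1
              \<and> 2 * b * x5 + x6 * a = 2 * a * x2"
        have br: "?Q (y2*x1 - x2*y1) 0 (y4*x1 + y6*x3 - x4*y1 - x6*y3)
            (y4*x2 + 2*y5*x1 + y6*x4 - x4*y2 - 2*x5*y1 - x6*y4)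
            (2*y5*x2 + y6*x5 - 2*x5*y2 - x6*y5) 0"
          if "?Q x1 x2 x3 x4 x5 x6" "?Q y1 y2 y3 y4 y5 y6" for x1 x2 x3 x4 x5 x6 y1 y2 y3 y4 y5 y6
        proof -
          from that 2(1) have e: "x3 = c*x1/b" "x4 = (c * x2 + a * x1 - x6 * c)/b"
            "x5 = (2 * a * x2 - x6 * a)/(2*b)" "y3 = c*y1/b" "y4 = (c * y2 + a * y1 - y6 * c)/b"
            "y5 = (2 * a * y2 - y6 * a)/(2*b)"
            by (auto simp: field_simps)
          show ?thesis unfolding e using 2(1) by (simp add: field_simps)
        qed
        have inv: "\<exists>x1 x2 x3 x4 x5 x6. X = FF x1 x2 x3 x4 x5 x6 \<and> ?Q x1 x2 x3 x4 x5 x6"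
          if "X \<in> lie_gen {f0, f1}" for X
        proof (rule lie_gen_inv[OF _ _ _ _ that])
          fix X assume "X \<in> {f0, f1}"
          moreover have "?Q 0 \<beta> 0 \<gamma> (\<alpha>/2) (lam+\<beta>)"
            using 2 unfolding A_def B_def by (auto simp: algebra_simps)
          moreover have "?Q b 0 c a 0 0" by (auto simp: algebra_simps)
          ultimately show "\<exists>x1 x2 x3 x4 x5 x6. X = FF x1 x2 x3 x4 x5 x6 \<and> ?Q x1 x2 x3 x4 x5 x6"
            unfolding f0_def f1_def by blast
        next
          show "\<And>x1 x2 x3 x4 x5 x6 y1 y2 y3 y4 y5 y6. ?Q x1 x2 x3 x4 x5 x6 \<Longrightarrow> ?Q y1 y2 y3 y4 y5 y6 \<Longrightarrow>
            ?Q (x1+y1) (x2+y2) (x3+y3) (x4+y4) (x5+y5) (x6+y6)"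
            by (auto simp: algebra_simps)
        next
          show "\<And>r x1 x2 x3 x4 x5 x6. ?Q x1 x2 x3 x4 x5 x6 \<Longrightarrow>
            ?Q (r*x1) (r*x2) (r*x3) (r*x4) (r*x5) (r*x6)"
          proof -
            fix r x1 x2 x3 x4 x5 x6 assume h: "?Q x1 x2 x3 x4 x5 x6"
            then have e: "r*(b * x3) = r*(c * x1)" "r*(b * x4 + x6 * c) = r*(c * x2 + a * x1)"
              "r*(2 * b * x5 + x6 * a) = r*(2 * a * x2)" by simp_all
            then show "?Q (r*x1) (r*x2) (r*x3) (r*x4) (r*x5) (r*x6)"
              by (simp add: algebra_simps)
          qed
        next
          show "\<And>x1 x2 x3 x4 x5 x6 y1 y2 y3 y4 y5 y6. ?Q x1 x2 x3 x4 x5 x6 \<Longrightarrow> ?Q y1 y2 y3 y4 y5 y6 \<Longrightarrow>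
            ?Q (y2*x1 - x2*y1) 0 (y4*x1 + y6*x3 - x4*y1 - x6*y3)
            (y4*x2 + 2*y5*x1 + y6*x4 - x4*y2 - 2*x5*y1 - x6*y4)
            (2*y5*x2 + y6*x5 - 2*x5*y2 - x6*y5) 0"
            by (rule br)
        qed
        have sub: "subspace {v::real\<times>real. b * snd v = c * fst v}"
          by (auto simp: subspace_def algebra_simps)
        have "(\<lambda>X. X (0,0)) ` lie_gen {f0, f1} \<subseteq> {v. b * snd v = c * fst v}"
          using inv by (force simp: FF_def)
        then have "span ((\<lambda>X. X (0,0)) ` lie_gen {f0, f1}) \<subseteq> {v. b * snd v = c * fst v}"
          using span_minimal sub by blast
        moreover have "span ((\<lambda>X. X (0,0)) ` lie_gen {f0, f1}) = UNIV"
          using L unfolding LARC_def by blast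
        ultimately have "(0::real, 1::real) \<in> {v. b * snd v = c * fst v}" by blast
        then show False using 2 by simp
      qed
    qed
  next
    assume R: "b \<noteq> 0 \<and> (A \<noteq> 0 \<or> B \<noteq> 0)"
    have f1L: "f1 \<in> lie_gen {f0, f1}" by (auto intro: lie_gen.base)
    have g1L: "lie_bracket f0 f1 \<in> lie_gen {f0, f1}" by (auto intro: lie_gen.base lie_gen.bracket)
    have kL: "lie_bracket f1 (lie_bracket f0 f1) \<in> lie_gen {f0, f1}"
      using f1L g1L by (rule lie_gen.bracket)
    have hL: "(\<lambda>x. lie_bracket f0 f1 x + (\<lambda>x. \<beta> *\<^sub>R f1 x) x) \<in> lie_gen {f0, f1}"
      using g1L lie_gen.scale[OF f1L] by (rule lie_gen.add)
    show "LARC {f0, f1}"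
      unfolding LARC_def
    proof
      fix p :: "real \<times> real"
      obtain s t where p: "p = (s, t)" by force
      let ?V = "(\<lambda>X. X p) ` lie_gen {f0, f1}"
      have f1v: "f1 p = (b, c + a * s)" by (simp add: f1_def FF_def p)
      have kv: "lie_bracket f1 (lie_bracket f0 f1) p = (0, - b * A)"
        unfolding f0_def f1_def FF_bracket by (simp add: FF_def p A_def algebra_simps)
      have hv: "(\<lambda>x. lie_bracket f0 f1 x + (\<lambda>x. \<beta> *\<^sub>R f1 x) x) p = (0, - (A * s + B))"
        unfolding f0_def f1_def FF_bracket by (simp add: FF_def p A_def B_def algebra_simps)
      have v1: "(b, c + a * s) \<in> span ?V"
        by (rule span_base, rule image_eqI[where f="\<lambda>X. X p", OF _ f1L]) (simp add: f1v)
      have v2: "(0, - b * A) \<in> span ?V"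
        by (rule span_base, rule image_eqI[where f="\<lambda>X. X p", OF _ kL]) (simp add: kv)
      have v3: "(0, - (A * s + B)) \<in> span ?V"
        by (rule span_base, rule image_eqI[where f="\<lambda>X. X p", OF _ hL]) (simp add: hv)
      show "span ?V = UNIV"
      proof (cases "A = 0")
        case True
        then have "- (A * s + B) \<noteq> 0" using R by simp
        then show ?thesis using R span_univ2[OF v1 _ v3] by blast
      next
        case False
        then have "- b * A \<noteq> 0" using R by simp
        then show ?thesis using R span_univ2[OF v1 _ v2] by blast
      qed
    qed
  qed
qed

end
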